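(* Let $S_X,S_Y$ be finite nonempty action sets, $\varphi:S_X\times S_Y\to\mathbb{R}$, $\lambda\in[0,1)$, and let $\tau_X^+,\tau_X^-\in\Delta(S_X)$ satisfy $$\min_{s_Y}\varphi(\tau_X^+,s_Y)\ge(1-\lambda)\max_{s_Y}\varphi(\tau_X^+,s_Y)+\lambda\max_{s_Y}\varphi(\tau_X^-,s_Y),$$ $$\max_{s_Y}\varphi(\tau_X^-,s_Y)\le\lambda\min_{s_Y}\varphi(\tau_X^+,s_Y)+(1-\lambda)\min_{s_Y}\varphi(\tau_X^-,s_Y),$$ (maxima and minima over $s_Y\in S_Y$). Then for every $K\in\big[\max_{s_Y}\varphi(\tau_X^-,s_Y),\ \min_{s_Y}\varphi(\tau_X^+,s_Y)\big]$ there exist $p_0\in[0,1]$ and $p^*:[0,1]\times S_Y\to[0,1]$ such that the reactive learning strategy with initial action $p_0\tau_X^++(1-p_0)\tau_X^-$ and reaction $$\sigma_X^*[p\tau_X^++(1-p)\tau_X^-,s_Y]=p^*[p,s_Y]\tau_X^++(1-p^*[p,s_Y])\tau_X^-$$ enforces $\varphi\equiv K$, i.e., is $(\varphi-K,\lambda)$-autocratic.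
   Context: Two players $X,Y$ play a repeated game with finite action sets $S_X,S_Y$; $\Delta(S)$ denotes the probability distributions on $S$; $\varphi(\tau_X,s_Y)=\mathbb{E}_{s_X\sim\tau_X}[\varphi(s_X,s_Y)]$. Histories: $\mathcal{H}=\bigcup_{T\ge0}(S_X\times S_Y)^T$; behavioral strategies are maps $\sigma:\mathcal{H}\to\Delta(S)$; players independently draw actions each round from their strategies evaluated at the history of realized action pairs, with $\mathbb{E}_{\sigma_X,\sigma_Y}$ the expectation over the resulting play. For a function $f:S_X\times S_Y\to\mathbb{R}$, $\sigma_X$ is $(f,\lambda)$-autocratic if for every behavioral strategy $\sigma_Y$ of $Y$, $\mathbb{E}_{\sigma_X,\sigma_Y}[(1-\lambda)\sum_{t\ge0}\lambda^tf(s_X^t,s_Y^t)]=0$. A reactive learning strategy with initial action $\sigma_X^0\in\Delta(S_X)$ and reaction $\sigma_X^*$ plays $\tau_X^0=\sigma_X^0$ in round $0$ and $\tau_X^{t+1}=\sigma_X^*[\tau_X^t,s_Y^t]$ in round $t+1$, where $s_Y^t$ is $Y$'s realized action in round $t$. *)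

theory Defs
  imports "HOL-Probability.Probability"
begin

type_synonym ('x,'y) history = "('x \<times> 'y) list"
type_synonym ('x,'y,'a) strategy = "('x,'y) history \<Rightarrow> 'a pmf"

fun hist_dist :: "('x,'y,'x) strategy \<Rightarrow> ('x,'y,'y) strategy \<Rightarrow> nat \<Rightarrow> ('x,'y) history pmf" where
  "hist_dist \<sigma>X \<sigma>Y 0 = return_pmf []"
| "hist_dist \<sigma>X \<sigma>Y (Suc T) =
     bind_pmf (hist_dist \<sigma>X \<sigma>Y T) (\<lambda>h.
       bind_pmf (\<sigma>X h) (\<lambda>x. bind_pmf (\<sigma>Y h) (\<lambda>y. return_pmf (h @ [(x, y)]))))"

definition round_exp :: "('x,'y,'x) strategy \<Rightarrow> ('x,'y,'y) strategy \<Rightarrow> ('x \<Rightarrow> 'y \<Rightarrow> real) \<Rightarrow> nat \<Rightarrow> real" where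
  "round_exp \<sigma>X \<sigma>Y f t =
     measure_pmf.expectation (hist_dist \<sigma>X \<sigma>Y (Suc t)) (\<lambda>h. f (fst (last h)) (snd (last h)))"

text \<open>Expected normalized discounted payoff E[(1-\<lambda>) \<Sum>_t \<lambda>^t f(s_X^t,s_Y^t)]
  (f bounded, so expectation and sum commute).\<close>
definition disc_payoff :: "('x,'y,'x) strategy \<Rightarrow> ('x,'y,'y) strategy \<Rightarrow> ('x \<Rightarrow> 'y \<Rightarrow> real) \<Rightarrow> real \<Rightarrow> real" where
  "disc_payoff \<sigma>X \<sigma>Y f lam = (1 - lam) * (\<Sum>t. lam ^ t * round_exp \<sigma>X \<sigma>Y f t)"

definition autocratic :: "('x,'y,'x) strategy \<Rightarrow> ('x \<Rightarrow> 'y \<Rightarrow> real) \<Rightarrow> real \<Rightarrow> bool" where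
  "autocratic \<sigma>X f lam \<longleftrightarrow> (\<forall>\<sigma>Y :: ('x,'y,'y) strategy. disc_payoff \<sigma>X \<sigma>Y f lam = 0)"

text \<open>Reactive learning strategy: \<tau>^0 = \<sigma>0, \<tau>^{t+1} = \<sigma>* [\<tau>^t, s_Y^t].\<close>
definition reactive :: "'x pmf \<Rightarrow> ('x pmf \<Rightarrow> 'y \<Rightarrow> 'x pmf) \<Rightarrow> ('x,'y,'x) strategy" where
  "reactive \<sigma>0 \<sigma>s h = fold (\<lambda>y \<tau>. \<sigma>s \<tau> y) (map snd h) \<sigma>0"

definition mixpay :: "('x \<Rightarrow> 'y \<Rightarrow> real) \<Rightarrow> 'x pmf \<Rightarrow> 'y \<Rightarrow> real" where
  "mixpay \<phi> \<tau> y = measure_pmf.expectation \<tau> (\<lambda>x. \<phi> x y)"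

definition mix :: "real \<Rightarrow> 'x pmf \<Rightarrow> 'x pmf \<Rightarrow> 'x pmf" where
  "mix p \<tau>1 \<tau>2 = bind_pmf (bernoulli_pmf p) (\<lambda>b. if b then \<tau>1 else \<tau>2)"

end

theory Submission imports Defs begin
lemma integral_bind_pmf_bd:
  fixes f :: "'b \<Rightarrow> real"
  assumes "\<And>x. \<bar>f x\<bar> \<le> B"
  shows "(\<integral>x. f x \<partial>measure_pmf (bind_pmf M N)) = (\<integral>x. (\<integral>y. f y \<partial>measure_pmf (N x)) \<partial>measure_pmf M)"
  unfolding measure_pmf_bind
  apply (rule integral_bind[where K="count_space UNIV" and B=B and B'=1])
  using assms apply (auto simp: measure_pmf.emeasure_space_1 prob_space_imp_subprob_space
    measure_pmf_in_subprob_algebra intro!: measure_pmf.finite_measure)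
  done

lemma pmf_integrable_bd:
  fixes f :: "'b \<Rightarrow> real"
  assumes "\<And>x. \<bar>f x\<bar> \<le> B"
  shows "integrable (measure_pmf M) f"
  by (rule measure_pmf.integrable_const_bound[where B=B]) (use assms in auto)

lemma pmf_int_bd:
  fixes f :: "'b \<Rightarrow> real"
  assumes "\<And>x. \<bar>f x\<bar> \<le> B"
  shows "\<bar>\<integral>x. f x \<partial>measure_pmf M\<bar> \<le> B"
proof -
  have "\<bar>\<integral>x. f x \<partial>measure_pmf M\<bar> \<le> (\<integral>x. \<bar>f x\<bar> \<partial>measure_pmf M)"
    by (rule integral_abs_bound)
  also have "\<dots> \<le> (\<integral>x. B \<partial>measure_pmf M)"
    by (rule integral_mono) (use assms in \<open>auto intro: pmf_integrable_bd[where B=B]\<close>)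
  also have "\<dots> = B" by simp
  finally show ?thesis .
qed

lemma int_swap_finite:
  fixes F :: "'a::finite \<Rightarrow> 'b::finite \<Rightarrow> real"
  shows "(\<integral>x. (\<integral>y. F x y \<partial>measure_pmf N) \<partial>measure_pmf M) = (\<integral>y. (\<integral>x. F x y \<partial>measure_pmf M) \<partial>measure_pmf N)"
proof -
  have "(\<Sum>a\<in>UNIV. pmf M a * (\<Sum>aa\<in>UNIV. F a aa * pmf N aa)) =
     (\<Sum>a\<in>UNIV. pmf N a * (\<Sum>aa\<in>UNIV. F aa a * pmf M aa))"
    unfolding sum_distrib_left
    by (subst sum.swap) (simp add: mult.commute mult.left_commute)
  then show ?thesis by (simp add: integral_measure_pmf_real[where A=UNIV] mult.commute)
qed

lemma tele:
  fixes \<sigma>X :: "('x,'y,'x) strategy" and \<sigma>Y :: "('x,'y,'y) strategy"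
    and f :: "'x \<Rightarrow> 'y \<Rightarrow> real" and V :: "('x,'y) history \<Rightarrow> real"
  assumes lam: "0 \<le> lam" "lam < 1"
    and Vb: "\<And>h. \<bar>V h\<bar> \<le> B" and fb: "\<And>x y. \<bar>f x y\<bar> \<le> C"
    and V0: "V [] = 0"
    and step: "\<And>h. V h - lam * (\<integral>x. (\<integral>y. V (h @ [(x,y)]) \<partial>measure_pmf (\<sigma>Y h)) \<partial>measure_pmf (\<sigma>X h))
       = (1 - lam) * (\<integral>x. (\<integral>y. f x y \<partial>measure_pmf (\<sigma>Y h)) \<partial>measure_pmf (\<sigma>X h))"
  shows "disc_payoff \<sigma>X \<sigma>Y f lam = 0"
proof -
  define W where "W h = (\<integral>x. (\<integral>y. V (h @ [(x,y)]) \<partial>measure_pmf (\<sigma>Y h)) \<partial>measure_pmf (\<sigma>X h))" for h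
  define Fh where "Fh h = (\<integral>x. (\<integral>y. f x y \<partial>measure_pmf (\<sigma>Y h)) \<partial>measure_pmf (\<sigma>X h))" for h
  define G where "G t = (\<integral>h. V h \<partial>measure_pmf (hist_dist \<sigma>X \<sigma>Y t))" for t
  have Wb: "\<bar>W h\<bar> \<le> B" for h
    unfolding W_def by (intro pmf_int_bd Vb)
  have Fb: "\<bar>Fh h\<bar> \<le> C" for h
    unfolding Fh_def by (intro pmf_int_bd fb)
  have Gb: "\<bar>G t\<bar> \<le> B" for t
    unfolding G_def by (intro pmf_int_bd Vb)
  have GS: "G (Suc t) = (\<integral>h. W h \<partial>measure_pmf (hist_dist \<sigma>X \<sigma>Y t))" for t
    unfolding G_def W_def
    by (simp add: integral_bind_pmf_bd[where B=B, OF Vb])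
  have R: "round_exp \<sigma>X \<sigma>Y f t = (\<integral>h. Fh h \<partial>measure_pmf (hist_dist \<sigma>X \<sigma>Y t))" for t
  proof -
    have b: "\<bar>f (fst (last h)) (snd (last h))\<bar> \<le> C" for h :: "('x,'y) history" by (rule fb)
    show ?thesis unfolding round_exp_def Fh_def
      by (simp add: integral_bind_pmf_bd[where B=C, OF b])
  qed
  have key: "(1 - lam) * round_exp \<sigma>X \<sigma>Y f t = G t - lam * G (Suc t)" for t
  proof -
    have iV: "integrable (measure_pmf (hist_dist \<sigma>X \<sigma>Y t)) V" by (rule pmf_integrable_bd[OF Vb])
    have iW: "integrable (measure_pmf (hist_dist \<sigma>X \<sigma>Y t)) W" by (rule pmf_integrable_bd[OF Wb])
    have "G t - lam * G (Suc t) = (\<integral>h. V h - lam * W h \<partial>measure_pmf (hist_dist \<sigma>X \<sigma>Y t))"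
      unfolding GS by (simp add: G_def iV iW)
    also have "\<dots> = (\<integral>h. (1 - lam) * Fh h \<partial>measure_pmf (hist_dist \<sigma>X \<sigma>Y t))"
      using step unfolding W_def Fh_def by simp
    also have "\<dots> = (1 - lam) * round_exp \<sigma>X \<sigma>Y f t" unfolding R by simp
    finally show ?thesis by simp
  qed
  define F where "F t = lam ^ t * G t" for t
  have "F \<longlonglongrightarrow> 0"
  proof (rule Lim_null_comparison[where g="\<lambda>t. B * lam ^ t"])
    show "\<forall>\<^sub>F t in sequentially. norm (F t) \<le> B * lam ^ t"
      using Gb lam by (auto simp: F_def abs_mult intro!: always_eventually)
        (metis mult.commute mult_right_mono zero_le_power)
    show "(\<lambda>t. B * lam ^ t) \<longlonglongrightarrow> 0"
      using lam by (intro tendsto_mult_right_zero LIMSEQ_power_zero) auto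
  qed
  then have "(\<lambda>n. F n - F (Suc n)) sums (F 0 - 0)" by (rule telescope_sums')
  moreover have "F 0 = 0" using V0 by (simp add: F_def G_def)
  moreover have "F n - F (Suc n) = (1 - lam) * (lam ^ n * round_exp \<sigma>X \<sigma>Y f n)" for n
  proof -
    have "F n - F (Suc n) = lam ^ n * (G n - lam * G (Suc n))" by (simp add: F_def algebra_simps)
    then show ?thesis using key[of n] by simp
  qed
  ultimately have "(\<lambda>n. (1 - lam) * (lam ^ n * round_exp \<sigma>X \<sigma>Y f n)) sums 0" by simp
  then have "(\<lambda>n. 1 / (1 - lam) * ((1 - lam) * (lam ^ n * round_exp \<sigma>X \<sigma>Y f n))) sums (1 / (1 - lam) * 0)"
    by (rule sums_mult)
  then have "(\<lambda>n. lam ^ n * round_exp \<sigma>X \<sigma>Y f n) sums 0" using lam by simp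
  then show ?thesis unfolding disc_payoff_def by (simp add: sums_unique[symmetric])
qed

lemma mixpay_mix:
  fixes \<phi> :: "'x::finite \<Rightarrow> 'y \<Rightarrow> real"
  assumes "0 \<le> p" "p \<le> 1"
  shows "mixpay \<phi> (mix p \<tau>1 \<tau>2) y = p * mixpay \<phi> \<tau>1 y + (1 - p) * mixpay \<phi> \<tau>2 y"
proof -
  have b: "\<bar>\<phi> x y\<bar> \<le> (\<Sum>x'\<in>UNIV. \<bar>\<phi> x' y\<bar>)" for x
    by (rule member_le_sum) auto
  show ?thesis unfolding mixpay_def mix_def
    using assms
    by (simp add: integral_bind_pmf_bd[where B="\<Sum>x'\<in>UNIV. \<bar>\<phi> x' y\<bar>", OF b])
qed

theorem lemma2:
  fixes \<phi> :: "'x::finite \<Rightarrow> 'y::finite \<Rightarrow> real"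
    and lam K :: real and \<tau>p \<tau>m :: "'x pmf"
  assumes "0 \<le> lam" and "lam < 1"
    and "Min (range (mixpay \<phi> \<tau>p)) \<ge>
           (1 - lam) * Max (range (mixpay \<phi> \<tau>p)) + lam * Max (range (mixpay \<phi> \<tau>m))"
    and "Max (range (mixpay \<phi> \<tau>m)) \<le>
           lam * Min (range (mixpay \<phi> \<tau>p)) + (1 - lam) * Min (range (mixpay \<phi> \<tau>m))"
    and "Max (range (mixpay \<phi> \<tau>m)) \<le> K" and "K \<le> Min (range (mixpay \<phi> \<tau>p))"
  shows "\<exists>p0 (ps :: real \<Rightarrow> 'y \<Rightarrow> real).
           p0 \<in> {0..1} \<and> (\<forall>p\<in>{0..1}. \<forall>y. ps p y \<in> {0..1}) \<and>
           (\<forall>\<sigma>s :: 'x pmf \<Rightarrow> 'y \<Rightarrow> 'x pmf.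
              (\<forall>p\<in>{0..1}. \<forall>y. \<sigma>s (mix p \<tau>p \<tau>m) y = mix (ps p y) \<tau>p \<tau>m) \<longrightarrow>
              autocratic (reactive (mix p0 \<tau>p \<tau>m) \<sigma>s) (\<lambda>x y. \<phi> x y - K) lam)"
proof -
  define a where "a = mixpay \<phi> \<tau>p"
  define b where "b = mixpay \<phi> \<tau>m"
  define Amin where "Amin = Min (range a)"
  define Amax where "Amax = Max (range a)"
  define Bmin where "Bmin = Min (range b)"
  define Bmax where "Bmax = Max (range b)"
  have lam0: "0 \<le> lam" and lam1: "lam < 1" using assms by auto
  have h1: "Amin \<ge> (1 - lam) * Amax + lam * Bmax"
    using assms(3) by (simp add: Amin_def Amax_def Bmax_def a_def b_def)
  have h2: "Bmax \<le> lam * Amin + (1 - lam) * Bmin"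
    using assms(4) by (simp add: Amin_def Bmin_def Bmax_def a_def b_def)
  have h3: "Bmax \<le> K" "K \<le> Amin"
    using assms(5,6) by (simp_all add: Amin_def Bmax_def a_def b_def)
  have aI: "Amin \<le> a y" "a y \<le> Amax" for y
    unfolding Amin_def Amax_def by (auto intro: Min_le Max_ge)
  have bI: "Bmin \<le> b y" "b y \<le> Bmax" for y
    unfolding Bmin_def Bmax_def by (auto intro: Min_le Max_ge)
  define s where "s = Amin - Bmax"
  have s0: "0 \<le> s" using h3 by (simp add: s_def)
  define p0 where "p0 = (if s > 0 then (K - Bmax) / s else 0)"
  define ps where "ps p y = (if lam > 0 \<and> s > 0 then
       p0 + (s * (p - p0) - (1 - lam) * (p * a y + (1 - p) * b y - K)) / (lam * s) else 0)" for p y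
  have p0I: "p0 \<in> {0..1}"
    using h3 s0 by (auto simp: p0_def s_def field_simps)
  have psI: "ps p y \<in> {0..1}" if p: "p \<in> {0..1}" for p y
  proof (cases "lam > 0 \<and> s > 0")
    case True
    define u where "u = K - Bmax"
    define w where "w = Amin - K"
    have sp: "s * p0 = u" using True by (simp add: p0_def u_def)
    define E0 where "E0 = (1 - lam) * (Bmax - b y)"
    define E1 where "E1 = lam * u + w - (1 - lam) * (a y - K)"
    define X where "X = s * (p - p0) - (1 - lam) * (p * a y + (1 - p) * b y - K)"
    have ls0: "lam * s \<noteq> 0" using True by simp
    have "lam * s * ps p y = lam * (s * p0) + lam * s * (X / (lam * s))"
      using True unfolding ps_def X_def by (simp add: algebra_simps)
    also have "\<dots> = lam * u + X" using ls0 sp by simp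
    finally have E': "lam * s * ps p y = lam * u + X" .
    have suw: "s = u + w" by (simp add: s_def u_def w_def)
    have E: "lam * s * ps p y = p * E1 + (1 - p) * E0"
      unfolding E' X_def E0_def E1_def
      by (simp only: right_diff_distrib sp) (simp add: suw u_def algebra_simps)
    have E0a: "0 \<le> E0" using bI[of y] lam1 by (simp add: E0_def)
    have E0b: "E0 \<le> lam * s"
    proof -
      have "E0 \<le> (1 - lam) * (Bmax - Bmin)"
        unfolding E0_def using bI[of y] lam1 by (intro mult_left_mono) auto
      then show ?thesis using h2 by (simp add: s_def algebra_simps)
    qed
    have E1a: "0 \<le> E1"
    proof -
      have "(1 - lam) * (a y - K) \<le> (1 - lam) * (Amax - K)"
        using aI[of y] lam1 by (intro mult_left_mono) auto
      then show ?thesis using h1 by (simp add: E1_def u_def w_def algebra_simps)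
    qed
    have E1b: "E1 \<le> lam * s"
    proof -
      have "(1 - lam) * (Amin - K) \<le> (1 - lam) * (a y - K)"
        using aI[of y] lam1 by (intro mult_left_mono) auto
      then show ?thesis by (simp add: E1_def u_def w_def s_def algebra_simps)
    qed
    have pp: "0 \<le> p" "p \<le> 1" using p by auto
    have lo: "0 \<le> p * E1 + (1 - p) * E0" using pp E0a E1a by simp
    have hi: "p * E1 + (1 - p) * E0 \<le> p * (lam * s) + (1 - p) * (lam * s)"
      using pp E0b E1b by (intro add_mono mult_left_mono) auto
    have ls: "lam * s > 0" using True by simp
    have "0 \<le> lam * s * ps p y" "lam * s * ps p y \<le> lam * s * 1"
      using lo hi E by (auto simp: algebra_simps)
    then have "0 \<le> ps p y" "ps p y \<le> 1" using ls
      by (simp_all add: zero_le_mult_iff mult_le_cancel_left_pos del: mult_1_right)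
    then show ?thesis by simp
  next
    case False
    then have "ps p y = 0" unfolding ps_def by auto
    then show ?thesis by simp
  qed
  have ident: "s * (p - p0) - lam * (s * (ps p y - p0)) = (1 - lam) * (p * a y + (1 - p) * b y - K)"
    if p: "p \<in> {0..1}" for p y
  proof (cases "s > 0")
    case True
    show ?thesis
    proof (cases "lam > 0")
      case True
      then show ?thesis using \<open>s > 0\<close> by (simp add: ps_def field_simps)
    next
      case False
      then have l: "lam = 0" using lam0 by simp
      have "a y = Amin" using aI[of y] h1 l by simp
      moreover have "b y = Bmax" using bI[of y] h2 l by simp
      moreover have "s * p0 = K - Bmax" using True by (simp add: p0_def)
      ultimately show ?thesis using l by (simp add: s_def algebra_simps)
    qed
  next
    case False
    then have "s = 0" using s0 by simp
    then have e: "Amin = K" "Bmax = K" using h3 by (auto simp: s_def)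
    have "(1 - lam) * Amax \<le> (1 - lam) * Amin" using h1 e by (simp add: algebra_simps)
    then have "Amax \<le> Amin" using lam1 by simp
    then have ay: "a y = K" using aI[of y] e by simp
    have "(1 - lam) * Bmax \<le> (1 - lam) * Bmin" using h2 e by (simp add: algebra_simps)
    then have "Bmax \<le> Bmin" using lam1 by simp
    then have by': "b y = K" using bI[of y] e by simp
    show ?thesis using \<open>s = 0\<close> ay by' by (simp add: algebra_simps)
  qed
  show ?thesis
  proof (intro exI conjI allI impI ballI)
    show "p0 \<in> {0..1}" by (rule p0I)
    show "ps p y \<in> {0..1}" if "p \<in> {0..1}" for p y using psI that by blast
    fix \<sigma>s :: "'x pmf \<Rightarrow> 'y \<Rightarrow> 'x pmf"
    assume hs: "\<forall>p\<in>{0..1}. \<forall>y. \<sigma>s (mix p \<tau>p \<tau>m) y = mix (ps p y) \<tau>p \<tau>m"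
    define P where "P h = fold (\<lambda>y p. ps p y) (map snd h) p0" for h :: "('x,'y) history"
    have PI: "P h \<in> {0..1} \<and> reactive (mix p0 \<tau>p \<tau>m) \<sigma>s h = mix (P h) \<tau>p \<tau>m" for h
    proof (induction h rule: rev_induct)
      case Nil
      then show ?case using p0I by (simp add: P_def reactive_def)
    next
      case (snoc xy h)
      then show ?case using psI hs
        by (auto simp: P_def reactive_def)
    qed
    show "autocratic (reactive (mix p0 \<tau>p \<tau>m) \<sigma>s) (\<lambda>x y. \<phi> x y - K) lam"
      unfolding autocratic_def
    proof
      fix \<sigma>Y :: "('x,'y,'y) strategy"
      define V where "V h = s * (P h - p0)" for h :: "('x,'y) history"
      show "disc_payoff (reactive (mix p0 \<tau>p \<tau>m) \<sigma>s) \<sigma>Y (\<lambda>x y. \<phi> x y - K) lam = 0"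
      proof (rule tele[where V=V and B=s and C="\<Sum>x\<in>UNIV. \<Sum>y\<in>UNIV. \<bar>\<phi> x y - K\<bar>"])
        show "0 \<le> lam" "lam < 1" by (fact lam0, fact lam1)
        show "\<bar>V h\<bar> \<le> s" for h
        proof -
          have "\<bar>P h - p0\<bar> \<le> 1" using PI[of h] p0I by auto
          then have "s * \<bar>P h - p0\<bar> \<le> s * 1" using s0 by (intro mult_left_mono) auto
          then show ?thesis using s0 by (simp add: V_def abs_mult)
        qed
        show "\<bar>\<phi> x y - K\<bar> \<le> (\<Sum>x\<in>UNIV. \<Sum>y\<in>UNIV. \<bar>\<phi> x y - K\<bar>)" for x y
        proof -
          have "\<bar>\<phi> x y - K\<bar> \<le> (\<Sum>y\<in>UNIV. \<bar>\<phi> x y - K\<bar>)" by (rule member_le_sum) auto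
          also have "\<dots> \<le> (\<Sum>x\<in>UNIV. \<Sum>y\<in>UNIV. \<bar>\<phi> x y - K\<bar>)"
            by (rule member_le_sum[where f="\<lambda>x. \<Sum>y\<in>UNIV. \<bar>\<phi> x y - K\<bar>"]) (auto intro: sum_nonneg)
          finally show ?thesis .
        qed
        show "V [] = 0" by (simp add: V_def P_def)
        fix h :: "('x,'y) history"
        define q where "q = P h"
        have q01: "q \<in> {0..1}" using PI[of h] by (simp add: q_def)
        have sX: "reactive (mix p0 \<tau>p \<tau>m) \<sigma>s h = mix q \<tau>p \<tau>m" using PI[of h] by (simp add: q_def)
        have Vs: "V (h @ [(x, y)]) = s * (ps q y - p0)" for x y
          by (simp add: V_def P_def q_def)
        have L: "(\<integral>x. (\<integral>y. V (h @ [(x,y)]) \<partial>measure_pmf (\<sigma>Y h)) \<partial>measure_pmf (reactive (mix p0 \<tau>p \<tau>m) \<sigma>s h))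
             = (\<integral>y. s * (ps q y - p0) \<partial>measure_pmf (\<sigma>Y h))"
          by (simp add: Vs sX)
        have R: "(\<integral>x. (\<integral>y. \<phi> x y - K \<partial>measure_pmf (\<sigma>Y h)) \<partial>measure_pmf (reactive (mix p0 \<tau>p \<tau>m) \<sigma>s h))
             = (\<integral>y. q * a y + (1 - q) * b y - K \<partial>measure_pmf (\<sigma>Y h))"
        proof -
          have "(\<integral>x. (\<integral>y. \<phi> x y - K \<partial>measure_pmf (\<sigma>Y h)) \<partial>measure_pmf (mix q \<tau>p \<tau>m))
              = (\<integral>y. (\<integral>x. \<phi> x y - K \<partial>measure_pmf (mix q \<tau>p \<tau>m)) \<partial>measure_pmf (\<sigma>Y h))"
            by (rule int_swap_finite)
          also have "\<dots> = (\<integral>y. mixpay \<phi> (mix q \<tau>p \<tau>m) y - K \<partial>measure_pmf (\<sigma>Y h))"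
            unfolding mixpay_def
          proof (rule Bochner_Integration.integral_cong[OF refl])
            fix y
            have "integrable (measure_pmf (mix q \<tau>p \<tau>m)) (\<lambda>x. \<phi> x y)"
              by (rule integrable_measure_pmf_finite) simp
            then show "(\<integral>x. \<phi> x y - K \<partial>measure_pmf (mix q \<tau>p \<tau>m)) = (\<integral>x. \<phi> x y \<partial>measure_pmf (mix q \<tau>p \<tau>m)) - K"
              by simp
          qed
          also have "\<dots> = (\<integral>y. q * a y + (1 - q) * b y - K \<partial>measure_pmf (\<sigma>Y h))"
            using q01 by (simp add: mixpay_mix a_def b_def)
          finally show ?thesis by (simp add: sX)
        qed
        have iy: "integrable (measure_pmf (\<sigma>Y h)) g" for g :: "'y \<Rightarrow> real"
          by (rule integrable_measure_pmf_finite) simp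
        have "V h - lam * (\<integral>y. s * (ps q y - p0) \<partial>measure_pmf (\<sigma>Y h))
            = (\<integral>y. s * (q - p0) - lam * (s * (ps q y - p0)) \<partial>measure_pmf (\<sigma>Y h))"
          by (simp add: iy V_def q_def)
        also have "\<dots> = (\<integral>y. (1 - lam) * (q * a y + (1 - q) * b y - K) \<partial>measure_pmf (\<sigma>Y h))"
          using ident[OF q01] by simp
        also have "\<dots> = (1 - lam) * (\<integral>y. q * a y + (1 - q) * b y - K \<partial>measure_pmf (\<sigma>Y h))"
          by simp
        finally show "V h - lam * (\<integral>x. (\<integral>y. V (h @ [(x,y)]) \<partial>measure_pmf (\<sigma>Y h)) \<partial>measure_pmf (reactive (mix p0 \<tau>p \<tau>m) \<sigma>s h))
           = (1 - lam) * (\<integral>x. (\<integral>y. \<phi> x y - K \<partial>measure_pmf (\<sigma>Y h)) \<partial>measure_pmf (reactive (mix p0 \<tau>p \<tau>m) \<sigma>s h))"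
          unfolding L R .
      qed
    qed
  qed
qed
end
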